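(* The logic $\mathsf{MGrz}\vee\mathsf{LKur}$ (the smallest extension of $\mathsf{MS4}$ containing both $\mathsf{MGrz}$ and $\mathsf{LKur}$) is not a modal companion of $\mathsf{MIPC}$.
   Context: $\mathsf{MIPC}$ is the smallest set of formulas in the bimodal language $\mathcal{L}_{\forall\exists}$ containing all theorems of $\mathsf{IPC}$; $\forall(p\wedge q)\leftrightarrow(\forall p\wedge\forall q)$, $\forall p\to p$, $\forall p\to\forall\forall p$; $\exists(p\vee q)\leftrightarrow(\exists p\vee\exists q)$, $p\to\exists p$, $\exists\exists p\to\exists p$, $(\exists p\wedge\exists q)\to\exists(\exists p\wedge q)$; $\exists\forall p\to\forall p$, $\exists p\to\forall\exists p$; closed under modus ponens, substitution and $\varphi/\forall\varphi$. $\mathsf{MS4}$ is the smallest set of formulas in the classical bimodal language $\mathcal{L}_{\Box\forall}$ containing all classical tautologies, the $\mathsf{S4}$ axioms for $\Box$, the $\mathsf{S5}$ axioms for $\forall$, and $\Box\forall p\to\forall\Box p$, closed under modus ponens, substitution, $\Box$- and $\forall$-necessitation; extensions are such sets closed under these rules. $\Diamond=\neg\Box\neg$. $\mathsf{MGrz}=\mathsf{MS4}+\Box(\Box(p\to\Box p)\to p)\to p$, $\mathsf{LKur}=\mathsf{MS4}+\Box\forall\Diamond\Box p\to\Diamond\forall p$. Gödel translation: $\bot^t=\bot$, $p^t=\Box p$, $(\varphi\wedge\psi)^t=\varphi^t\wedge\psi^t$, $(\varphi\vee\psi)^t=\varphi^t\vee\psi^t$, $(\varphi\to\psi)^t=\Box(\neg\varphi^t\vee\psi^t)$,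 $(\forall\varphi)^t=\Box\forall\varphi^t$, $(\exists\varphi)^t=\exists\varphi^t$. An extension $\mathsf{M}$ of $\mathsf{MS4}$ is a modal companion of $\mathsf{MIPC}$ if for all $\varphi$: $\mathsf{MIPC}\vdash\varphi$ iff $\mathsf{M}\vdash\varphi^t$. *)

theory Defs
  imports Main
begin

datatype ifm =
    IVar nat | IBot | IAnd ifm ifm | IOr ifm ifm | IImp ifm ifm
  | IAll ifm | IEx ifm

definition IIff :: "ifm \<Rightarrow> ifm \<Rightarrow> ifm" where
  "IIff a b = IAnd (IImp a b) (IImp b a)"

fun isubst :: "(nat \<Rightarrow> ifm) \<Rightarrow> ifm \<Rightarrow> ifm" where
  "isubst s (IVar n) = s n"
| "isubst s IBot = IBot"
| "isubst s (IAnd a b) = IAnd (isubst s a) (isubst s b)"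
| "isubst s (IOr a b) = IOr (isubst s a) (isubst s b)"
| "isubst s (IImp a b) = IImp (isubst s a) (isubst s b)"
| "isubst s (IAll a) = IAll (isubst s a)"
| "isubst s (IEx a) = IEx (isubst s a)"

inductive ipc_ax :: "ifm \<Rightarrow> bool" where
  "ipc_ax (IImp a (IImp b a))"
| "ipc_ax (IImp (IImp a (IImp b c)) (IImp (IImp a b) (IImp a c)))"
| "ipc_ax (IImp (IAnd a b) a)"
| "ipc_ax (IImp (IAnd a b) b)"
| "ipc_ax (IImp a (IImp b (IAnd a b)))"
| "ipc_ax (IImp a (IOr a b))"
| "ipc_ax (IImp b (IOr a b))"
| "ipc_ax (IImp (IImp a c) (IImp (IImp b c) (IImp (IOr a b) c)))"
| "ipc_ax (IImp IBot a)"

inductive_set IPC :: "ifm set" where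
  "ipc_ax a \<Longrightarrow> a \<in> IPC"
| "a \<in> IPC \<Longrightarrow> IImp a b \<in> IPC \<Longrightarrow> b \<in> IPC"

abbreviation "ip \<equiv> IVar 0"
abbreviation "iq \<equiv> IVar 1"

definition mipc_axioms :: "ifm set" where
  "mipc_axioms = {
     IIff (IAll (IAnd ip iq)) (IAnd (IAll ip) (IAll iq)),
     IImp (IAll ip) ip,
     IImp (IAll ip) (IAll (IAll ip)),
     IIff (IEx (IOr ip iq)) (IOr (IEx ip) (IEx iq)),
     IImp ip (IEx ip),
     IImp (IEx (IEx ip)) (IEx ip),
     IImp (IAnd (IEx ip) (IEx iq)) (IEx (IAnd (IEx ip) iq)),
     IImp (IEx (IAll ip)) (IAll ip),
     IImp (IEx ip) (IAll (IEx ip)) }"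

inductive_set MIPC :: "ifm set" where
  ipc: "a \<in> IPC \<Longrightarrow> a \<in> MIPC"
| ax: "a \<in> mipc_axioms \<Longrightarrow> a \<in> MIPC"
| mp: "a \<in> MIPC \<Longrightarrow> IImp a b \<in> MIPC \<Longrightarrow> b \<in> MIPC"
| subst: "a \<in> MIPC \<Longrightarrow> isubst s a \<in> MIPC"
| gen: "a \<in> MIPC \<Longrightarrow> IAll a \<in> MIPC"

datatype mfm =
    MVar nat | MBot | MAnd mfm mfm | MOr mfm mfm | MImp mfm mfm
  | MBox mfm | MAll mfm

definition MNeg :: "mfm \<Rightarrow> mfm" where "MNeg a = MImp a MBot"
definition MDia :: "mfm \<Rightarrow> mfm" where "MDia a = MNeg (MBox (MNeg a))"
definition MEx :: "mfm \<Rightarrow> mfm" where "MEx a = MNeg (MAll (MNeg a))"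

fun msubst :: "(nat \<Rightarrow> mfm) \<Rightarrow> mfm \<Rightarrow> mfm" where
  "msubst s (MVar n) = s n"
| "msubst s MBot = MBot"
| "msubst s (MAnd a b) = MAnd (msubst s a) (msubst s b)"
| "msubst s (MOr a b) = MOr (msubst s a) (msubst s b)"
| "msubst s (MImp a b) = MImp (msubst s a) (msubst s b)"
| "msubst s (MBox a) = MBox (msubst s a)"
| "msubst s (MAll a) = MAll (msubst s a)"

fun beval :: "(mfm \<Rightarrow> bool) \<Rightarrow> mfm \<Rightarrow> bool" where
  "beval V (MVar n) = V (MVar n)"
| "beval V MBot = False"
| "beval V (MAnd a b) = (beval V a \<and> beval V b)"
| "beval V (MOr a b) = (beval V a \<or> beval V b)"
| "beval V (MImp a b) = (beval V a \<longrightarrow> beval V b)"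
| "beval V (MBox a) = V (MBox a)"
| "beval V (MAll a) = V (MAll a)"

definition tautology :: "mfm \<Rightarrow> bool" where
  "tautology a = (\<forall>V. beval V a)"

abbreviation "mp \<equiv> MVar 0"
abbreviation "mq \<equiv> MVar 1"

definition ms4_axioms :: "mfm set" where
  "ms4_axioms = {
     MImp (MBox (MImp mp mq)) (MImp (MBox mp) (MBox mq)),
     MImp (MBox mp) mp,
     MImp (MBox mp) (MBox (MBox mp)),
     MImp (MAll (MImp mp mq)) (MImp (MAll mp) (MAll mq)),
     MImp (MAll mp) mp,
     MImp (MEx mp) (MAll (MEx mp)),
     MImp (MBox (MAll mp)) (MAll (MBox mp)) }"

inductive_set MS4ext :: "mfm set \<Rightarrow> mfm set" for A :: "mfm set" where
  taut: "tautology a \<Longrightarrow> a \<in> MS4ext A"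
| ax: "a \<in> ms4_axioms \<Longrightarrow> a \<in> MS4ext A"
| extra: "a \<in> A \<Longrightarrow> a \<in> MS4ext A"
| mp: "a \<in> MS4ext A \<Longrightarrow> MImp a b \<in> MS4ext A \<Longrightarrow> b \<in> MS4ext A"
| subst: "a \<in> MS4ext A \<Longrightarrow> msubst s a \<in> MS4ext A"
| nec_box: "a \<in> MS4ext A \<Longrightarrow> MBox a \<in> MS4ext A"
| nec_all: "a \<in> MS4ext A \<Longrightarrow> MAll a \<in> MS4ext A"

definition MS4 :: "mfm set" where "MS4 = MS4ext {}"

definition grz_axiom :: mfm where
  "grz_axiom = MImp (MBox (MImp (MBox (MImp mp (MBox mp))) mp)) mp"

definition kur_axiom :: mfm where
  "kur_axiom = MImp (MBox (MAll (MDia (MBox mp)))) (MDia (MAll mp))"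

definition MGrz :: "mfm set" where "MGrz = MS4ext {grz_axiom}"
definition LKur :: "mfm set" where "LKur = MS4ext {kur_axiom}"

definition MGrz_join_LKur :: "mfm set" where
  "MGrz_join_LKur = MS4ext (MGrz \<union> LKur)"

fun gt :: "ifm \<Rightarrow> mfm" where
  "gt IBot = MBot"
| "gt (IVar n) = MBox (MVar n)"
| "gt (IAnd a b) = MAnd (gt a) (gt b)"
| "gt (IOr a b) = MOr (gt a) (gt b)"
| "gt (IImp a b) = MBox (MOr (MNeg (gt a)) (gt b))"
| "gt (IAll a) = MBox (MAll (gt a))"
| "gt (IEx a) = MEx (gt a)"

definition is_extension_MS4 :: "mfm set \<Rightarrow> bool" where
  "is_extension_MS4 M \<longleftrightarrow> MS4 \<subseteq> M \<and>
     (\<forall>a b. a \<in> M \<longrightarrow> MImp a b \<in> M \<longrightarrow> b \<in> M) \<and>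
     (\<forall>a s. a \<in> M \<longrightarrow> msubst s a \<in> M) \<and>
     (\<forall>a. a \<in> M \<longrightarrow> MBox a \<in> M) \<and>
     (\<forall>a. a \<in> M \<longrightarrow> MAll a \<in> M)"

definition modal_companion_MIPC :: "mfm set \<Rightarrow> bool" where
  "modal_companion_MIPC M \<longleftrightarrow> is_extension_MS4 M \<and>
     (\<forall>\<phi>. \<phi> \<in> MIPC \<longleftrightarrow> gt \<phi> \<in> M)"

end

theory Submission
  imports Defs
begin

lemma msubst_MNeg[simp]: "msubst s (MNeg a) = MNeg (msubst s a)" by (simp add: MNeg_def)
lemma msubst_MDia[simp]: "msubst s (MDia a) = MDia (msubst s a)" by (simp add: MDia_def)
lemma msubst_MEx[simp]: "msubst s (MEx a) = MEx (msubst s a)" by (simp add: MEx_def)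

lemma foldr_mp: "foldr MImp as b \<in> MS4ext S \<Longrightarrow> set as \<subseteq> MS4ext S \<Longrightarrow> b \<in> MS4ext S"
  by (induction as) (auto intro: MS4ext.mp)

lemma tmp: "tautology (foldr MImp as b) \<Longrightarrow> set as \<subseteq> MS4ext S \<Longrightarrow> b \<in> MS4ext S"
  using foldr_mp MS4ext.taut by blast

lemma axi: "x \<in> ms4_axioms \<Longrightarrow> msubst s x \<in> MS4ext S"
  by (rule MS4ext.subst, rule MS4ext.ax)

lemma boxK: "MImp (MBox (MImp a b)) (MImp (MBox a) (MBox b)) \<in> MS4ext S"
  using axi[of "MImp (MBox (MImp mp mq)) (MImp (MBox mp) (MBox mq))" "\<lambda>n. if n = 0 then a else b" S]
  by (simp add: ms4_axioms_def)

lemma boxT: "MImp (MBox a) a \<in> MS4ext S"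
  using axi[of "MImp (MBox mp) mp" "\<lambda>n. a" S]
  by (simp add: ms4_axioms_def)

lemma box4: "MImp (MBox a) (MBox (MBox a)) \<in> MS4ext S"
  using axi[of "MImp (MBox mp) (MBox (MBox mp))" "\<lambda>n. a" S]
  by (simp add: ms4_axioms_def)

lemma allK: "MImp (MAll (MImp a b)) (MImp (MAll a) (MAll b)) \<in> MS4ext S"
  using axi[of "MImp (MAll (MImp mp mq)) (MImp (MAll mp) (MAll mq))" "\<lambda>n. if n = 0 then a else b" S]
  by (simp add: ms4_axioms_def)

lemma box_mono: "MImp a b \<in> MS4ext S \<Longrightarrow> MImp (MBox a) (MBox b) \<in> MS4ext S"
  using boxK MS4ext.mp MS4ext.nec_box by blast

lemma all_mono: "MImp a b \<in> MS4ext S \<Longrightarrow> MImp (MAll a) (MAll b) \<in> MS4ext S"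
  using allK MS4ext.mp MS4ext.nec_all by blast

lemma chain: "MImp a b \<in> MS4ext S \<Longrightarrow> MImp b c \<in> MS4ext S \<Longrightarrow> MImp a c \<in> MS4ext S"
  by (rule tmp[of "[MImp a b, MImp b c]"]) (auto simp: tautology_def)

lemma dia_mono: "MImp a b \<in> MS4ext S \<Longrightarrow> MImp (MDia a) (MDia b) \<in> MS4ext S"
proof -
  assume h: "MImp a b \<in> MS4ext S"
  have "MImp (MNeg b) (MNeg a) \<in> MS4ext S"
    by (rule tmp[of "[MImp a b]"]) (use h in \<open>auto simp: tautology_def MNeg_def\<close>)
  then have "MImp (MBox (MNeg b)) (MBox (MNeg a)) \<in> MS4ext S" by (rule box_mono)
  then show ?thesis
    by (intro tmp[of "[MImp (MBox (MNeg b)) (MBox (MNeg a))]"]) (auto simp: tautology_def MNeg_def MDia_def)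
qed

lemma dia4: "MImp (MDia (MDia a)) (MDia a) \<in> MS4ext S"
proof -
  have "MImp (MBox (MNeg a)) (MNeg (MNeg (MBox (MNeg a)))) \<in> MS4ext S"
    by (rule MS4ext.taut) (auto simp: tautology_def MNeg_def)
  then have "MImp (MBox (MBox (MNeg a))) (MBox (MNeg (MNeg (MBox (MNeg a))))) \<in> MS4ext S" by (rule box_mono)
  then have "MImp (MBox (MNeg a)) (MBox (MNeg (MNeg (MBox (MNeg a))))) \<in> MS4ext S" using box4 chain by blast
  then show ?thesis
    by (intro tmp[of "[MImp (MBox (MNeg a)) (MBox (MNeg (MNeg (MBox (MNeg a)))))]"]) (auto simp: tautology_def MDia_def MNeg_def)
qed

lemma box_conj: "MImp (MBox a) (MImp (MBox b) (MBox (MAnd a b))) \<in> MS4ext S"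
proof -
  have "MImp a (MImp b (MAnd a b)) \<in> MS4ext S"
    by (rule MS4ext.taut) (auto simp: tautology_def)
  then have "MImp (MBox a) (MBox (MImp b (MAnd a b))) \<in> MS4ext S" by (rule box_mono)
  then show ?thesis using boxK chain by blast
qed

lemma box_dia: "MImp (MBox a) (MImp (MDia b) (MDia (MAnd a b))) \<in> MS4ext S"
proof -
  have "MImp a (MImp (MNeg (MAnd a b)) (MNeg b)) \<in> MS4ext S"
    by (rule MS4ext.taut) (auto simp: tautology_def MNeg_def)
  then have "MImp (MBox a) (MBox (MImp (MNeg (MAnd a b)) (MNeg b))) \<in> MS4ext S" by (rule box_mono)
  then have "MImp (MBox a) (MImp (MBox (MNeg (MAnd a b))) (MBox (MNeg b))) \<in> MS4ext S" using boxK chain by blast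
  then show ?thesis
    by (intro tmp[of "[MImp (MBox a) (MImp (MBox (MNeg (MAnd a b))) (MBox (MNeg b)))]"]) (auto simp: tautology_def MDia_def MNeg_def)
qed

lemma mckinsey:
  assumes grz: "grz_axiom \<in> MS4ext S"
  shows "MImp (MBox (MDia r)) (MDia (MBox r)) \<in> MS4ext S"
proof -
  define G where "G = MBox (MImp (MNeg r) (MBox (MNeg r)))"
  have g1: "MImp (MBox (MImp G (MNeg r))) (MNeg r) \<in> MS4ext S"
    using MS4ext.subst[OF grz, of "\<lambda>n. MNeg r"] by (simp add: grz_axiom_def G_def)
  have g2: "MImp (MBox (MNeg (MAnd G r))) (MBox (MImp G (MNeg r))) \<in> MS4ext S"
    by (rule box_mono, rule MS4ext.taut) (auto simp: tautology_def MNeg_def)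
  have g3: "MImp r (MDia (MAnd G r)) \<in> MS4ext S"
    by (rule tmp[of "[MImp (MBox (MImp G (MNeg r))) (MNeg r), MImp (MBox (MNeg (MAnd G r))) (MBox (MImp G (MNeg r)))]"])
      (use g1 g2 in \<open>auto simp: tautology_def MNeg_def MDia_def\<close>)
  have g4: "MImp (MDia r) (MDia (MAnd G r)) \<in> MS4ext S"
    using chain[OF dia_mono[OF g3] dia4] .
  have g5: "MImp (MBox (MDia r)) (MDia (MAnd G r)) \<in> MS4ext S"
    using chain[OF boxT g4] .
  have g8a: "MImp (MBox (MDia r)) (MImp G (MBox (MAnd (MDia r) (MImp (MNeg r) (MBox (MNeg r)))))) \<in> MS4ext S"
    unfolding G_def by (rule box_conj)
  have g8b: "MImp (MBox (MAnd (MDia r) (MImp (MNeg r) (MBox (MNeg r))))) (MBox r) \<in> MS4ext S"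
    by (rule box_mono, rule MS4ext.taut) (auto simp: tautology_def MNeg_def MDia_def)
  have g8: "MImp (MAnd (MBox (MDia r)) (MAnd G r)) (MBox r) \<in> MS4ext S"
    by (rule tmp[of "[MImp (MBox (MDia r)) (MImp G (MBox (MAnd (MDia r) (MImp (MNeg r) (MBox (MNeg r)))))),
       MImp (MBox (MAnd (MDia r) (MImp (MNeg r) (MBox (MNeg r))))) (MBox r)]"])
      (use g8a g8b in \<open>auto simp: tautology_def\<close>)
  show ?thesis
    by (rule tmp[of "[MImp (MBox (MDia r)) (MDia (MAnd G r)),
        MImp (MBox (MDia r)) (MBox (MBox (MDia r))),
        MImp (MBox (MBox (MDia r))) (MImp (MDia (MAnd G r)) (MDia (MAnd (MBox (MDia r)) (MAnd G r)))),
        MImp (MDia (MAnd (MBox (MDia r)) (MAnd G r))) (MDia (MBox r))]"])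
      (use g5 box4 box_dia dia_mono[OF g8] in \<open>auto simp: tautology_def\<close>)
qed


definition NN :: "mfm \<Rightarrow> mfm" where
  "NN X = MBox (MOr (MNeg (MBox (MOr (MNeg X) MBot))) MBot)"

lemma nn1: "MImp (NN X) (MBox (MDia X)) \<in> MS4ext S"
proof -
  have "MImp (MBox (MNeg X)) (MBox (MOr (MNeg X) MBot)) \<in> MS4ext S"
    by (rule box_mono, rule MS4ext.taut) (auto simp: tautology_def)
  then have "MImp (MOr (MNeg (MBox (MOr (MNeg X) MBot))) MBot) (MDia X) \<in> MS4ext S"
    by (intro tmp[of "[MImp (MBox (MNeg X)) (MBox (MOr (MNeg X) MBot))]"]) (auto simp: tautology_def MDia_def MNeg_def)
  then show ?thesis unfolding NN_def by (rule box_mono)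
qed

lemma nn2: "MImp (MBox (MDia X)) (NN X) \<in> MS4ext S"
proof -
  have "MImp (MBox (MOr (MNeg X) MBot)) (MBox (MNeg X)) \<in> MS4ext S"
    by (rule box_mono, rule MS4ext.taut) (auto simp: tautology_def MNeg_def)
  then have "MImp (MDia X) (MOr (MNeg (MBox (MOr (MNeg X) MBot))) MBot) \<in> MS4ext S"
    by (intro tmp[of "[MImp (MBox (MOr (MNeg X) MBot)) (MBox (MNeg X))]"]) (auto simp: tautology_def MDia_def MNeg_def)
  then show ?thesis unfolding NN_def by (rule box_mono)
qed

lemma main_deriv:
  assumes grz: "grz_axiom \<in> MS4ext S" and kur: "kur_axiom \<in> MS4ext S"
  shows "MImp (MBox (MAll (NN (MBox p)))) (NN (MBox (MAll (MBox p)))) \<in> MS4ext S"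
proof -
  define P where "P = MBox p"
  define H where "H = MBox (MAll (MBox (MDia P)))"
  define R where "R = MAll P"
  have m1: "MImp (MBox (MDia P)) (MDia (MBox P)) \<in> MS4ext S"
    unfolding P_def using chain[OF boxT dia_mono[OF box4]] .
  have m2: "MImp H (MBox (MAll (MDia (MBox P)))) \<in> MS4ext S"
    unfolding H_def by (rule box_mono, rule all_mono, rule m1)
  have m3: "MImp (MBox (MAll (MDia (MBox P)))) (MDia (MAll P)) \<in> MS4ext S"
    using MS4ext.subst[OF kur, of "\<lambda>n. P"] by (simp add: kur_axiom_def)
  have m4: "MImp H (MDia R) \<in> MS4ext S" unfolding R_def using chain[OF m2 m3] .
  have m5: "MImp H (MBox (MDia R)) \<in> MS4ext S"
    using chain[OF _ box_mono[OF m4]] box4 unfolding H_def by blast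
  have m6: "MImp H (MDia (MBox R)) \<in> MS4ext S"
    using chain[OF m5 mckinsey[OF grz]] .
  have m7: "MImp H (MBox (MDia (MBox R))) \<in> MS4ext S"
    using chain[OF _ box_mono[OF m6]] box4 unfolding H_def by blast
  have a: "MImp (MBox (MAll (NN P))) H \<in> MS4ext S"
    unfolding H_def by (rule box_mono, rule all_mono, rule nn1)
  show ?thesis using chain[OF chain[OF a m7] nn2] unfolding P_def R_def .
qed

lemma gt_kuroda_in:
  "gt (IImp (IAll (IImp (IImp ip IBot) IBot)) (IImp (IImp (IAll ip) IBot) IBot)) \<in> MGrz_join_LKur"
proof -
  have g: "grz_axiom \<in> MGrz_join_LKur"
    unfolding MGrz_join_LKur_def MGrz_def by (rule MS4ext.extra) (auto intro: MS4ext.extra)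
  have k: "kur_axiom \<in> MGrz_join_LKur"
    unfolding MGrz_join_LKur_def LKur_def by (rule MS4ext.extra) (auto intro: MS4ext.extra)
  have "MImp (MBox (MAll (NN (MBox mp)))) (NN (MBox (MAll (MBox mp)))) \<in> MGrz_join_LKur"
    using main_deriv[of "MGrz \<union> LKur"] g k unfolding MGrz_join_LKur_def by blast
  then have "MOr (MNeg (MBox (MAll (NN (MBox mp))))) (NN (MBox (MAll (MBox mp)))) \<in> MGrz_join_LKur"
    unfolding MGrz_join_LKur_def
    by (intro tmp[of "[MImp (MBox (MAll (NN (MBox mp)))) (NN (MBox (MAll (MBox mp))))]"]) (auto simp: tautology_def MNeg_def)
  then show ?thesis unfolding MGrz_join_LKur_def by (simp add: NN_def MS4ext.nec_box)
qed


datatype w3 = WA | WB | WC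

lemma all_w3: "(\<forall>w. P w) = (P WA \<and> P WB \<and> P WC)"
  by (metis w3.exhaust)
lemma ex_w3: "(\<exists>w. P w) = (P WA \<or> P WB \<or> P WC)"
  by (metis w3.exhaust)

definition Rw :: "w3 \<Rightarrow> w3 \<Rightarrow> bool" where
  "Rw x y = (x = y \<or> (x = WB \<and> y = WC))"

fun ev :: "(nat \<Rightarrow> w3 \<Rightarrow> bool) \<Rightarrow> w3 \<Rightarrow> ifm \<Rightarrow> bool" where
  "ev V w (IVar n) = V n w"
| "ev V w IBot = False"
| "ev V w (IAnd a b) = (ev V w a \<and> ev V w b)"
| "ev V w (IOr a b) = (ev V w a \<or> ev V w b)"
| "ev V w (IImp a b) = (\<forall>u. Rw w u \<longrightarrow> ev V u a \<longrightarrow> ev V u b)"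
| "ev V w (IAll a) = (\<forall>u. ev V u a)"
| "ev V w (IEx a) = (\<exists>u. ev V u a)"

definition upc :: "(nat \<Rightarrow> w3 \<Rightarrow> bool) \<Rightarrow> bool" where
  "upc V = (\<forall>n w u. Rw w u \<longrightarrow> V n w \<longrightarrow> V n u)"

lemma Rw_trans: "Rw x y \<Longrightarrow> Rw y z \<Longrightarrow> Rw x z" by (auto simp: Rw_def)

lemma persist: "upc V \<Longrightarrow> Rw w u \<Longrightarrow> ev V w a \<Longrightarrow> ev V u a"
  by (induction a arbitrary: w u) (auto simp: upc_def dest: Rw_trans)

definition valid :: "ifm \<Rightarrow> bool" where
  "valid a = (\<forall>V w. upc V \<longrightarrow> ev V w a)"

lemma ev_subst: "ev V w (isubst s a) = ev (\<lambda>n u. ev V u (s n)) w a"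
  by (induction a arbitrary: w) auto

lemma Rw_refl: "Rw x x" by (simp add: Rw_def)

lemma ipc_ax_valid: "ipc_ax a \<Longrightarrow> valid a"
  unfolding valid_def
  by (induction rule: ipc_ax.induct) (simp_all; meson Rw_trans Rw_refl persist)+

lemma IPC_valid: "a \<in> IPC \<Longrightarrow> valid a"
  by (induction rule: IPC.induct) (simp add: ipc_ax_valid, auto simp: valid_def Rw_def)

lemma mipc_ax_valid: "a \<in> mipc_axioms \<Longrightarrow> valid a"
  unfolding mipc_axioms_def valid_def
  by (auto simp: IIff_def Rw_def upc_def all_w3 ex_w3)

lemma MIPC_valid: "a \<in> MIPC \<Longrightarrow> valid a"
proof (induction rule: MIPC.induct)
  case (ipc a) then show ?case by (rule IPC_valid)
next
  case (ax a) then show ?case by (rule mipc_ax_valid)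
next
  case (mp a b) then show ?case by (auto simp: valid_def Rw_def)
next
  case (subst a s)
  show ?case unfolding valid_def ev_subst
  proof (intro allI impI)
    fix V w assume "upc V"
    then have "upc (\<lambda>n u. ev V u (s n))" unfolding upc_def using persist[OF \<open>upc V\<close>] by blast
    then show "ev (\<lambda>n u. ev V u (s n)) w a" using subst.IH unfolding valid_def by blast
  qed
next
  case (gen a) then show ?case by (auto simp: valid_def)
qed

lemma kuroda_not_MIPC:
  "IImp (IAll (IImp (IImp ip IBot) IBot)) (IImp (IImp (IAll ip) IBot) IBot) \<notin> MIPC"
proof
  assume "IImp (IAll (IImp (IImp ip IBot) IBot)) (IImp (IImp (IAll ip) IBot) IBot) \<in> MIPC"
  then have v: "valid (IImp (IAll (IImp (IImp ip IBot) IBot)) (IImp (IImp (IAll ip) IBot) IBot))"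
    by (rule MIPC_valid)
  define V :: "nat \<Rightarrow> w3 \<Rightarrow> bool" where "V = (\<lambda>n w. w \<noteq> WB)"
  have "upc V" by (auto simp: upc_def V_def Rw_def)
  with v have "ev V WA (IImp (IAll (IImp (IImp ip IBot) IBot)) (IImp (IImp (IAll ip) IBot) IBot))"
    unfolding valid_def by blast
  then show False by (simp add: V_def Rw_def all_w3 ex_w3)
qed

theorem proposition5p5:
  shows "\<not> modal_companion_MIPC MGrz_join_LKur"
  unfolding modal_companion_MIPC_def using gt_kuroda_in kuroda_not_MIPC by blast

end
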